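(* For integers $1\le r<n$, $$\mathrm{LE}(n)\cap\left(\frac{n!}{r+1},\,n!\right]=\left\{\frac{n!}{r!}\,\ell:\ \ell\in \mathrm{LE}(r)\cap\left(\frac{r!}{r+1},\,r!\right]\right\}.$$
   Context: All posets are finite. For a finite poset $P$, $\mathrm{ext}(P)$ denotes the number of linear extensions of $P$. For a positive integer $n$, $\mathrm{LE}(n)=\{\mathrm{ext}(P): P \text{ a poset with } |P|=n\}$. *)

theory Defs
  imports Complex_Main
begin

definition is_poset :: "'a set \<Rightarrow> 'a rel \<Rightarrow> bool" where
  "is_poset A R \<longleftrightarrow> finite A \<and> R \<subseteq> A \<times> A \<and> partial_order_on A R"

definition ext :: "'a set \<Rightarrow> 'a rel \<Rightarrow> nat" where
  "ext A R = card {L. linear_order_on A L \<and> L \<subseteq> A \<times> A \<and> R \<subseteq> L}"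

text \<open>Every n-element poset is isomorphic to one on {0..<n}.\<close>
definition LE :: "nat \<Rightarrow> nat set" where
  "LE n = {ext {0..<n} R | R. is_poset {0..<n} R}"

end

theory Submission
  imports Defs "HOL-Combinatorics.Multiset_Permutations"
begin


definition ok :: "'a rel \<Rightarrow> 'a list \<Rightarrow> bool" where
  "ok R xs = sorted_wrt (\<lambda>a b. (b,a) \<notin> R) xs"

definition cnt :: "'a rel \<Rightarrow> 'a set \<Rightarrow> nat" where
  "cnt R A = card {xs \<in> permutations_of_set A. ok R xs}"

fun Lof :: "'a list \<Rightarrow> 'a rel" where
  "Lof [] = {}"
| "Lof (x # xs) = {x} \<times> set (x # xs) \<union> Lof xs"

lemma ok_Cons[simp]: "ok R (x # xs) \<longleftrightarrow> (\<forall>b\<in>set xs. (b,x) \<notin> R) \<and> ok R xs"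
  by (auto simp: ok_def)

lemma ok_Nil[simp]: "ok R []" by (simp add: ok_def)

lemma Lof_sub: "Lof xs \<subseteq> set xs \<times> set xs"
  by (induction xs) auto

lemma Lof_refl: "a \<in> set xs \<Longrightarrow> (a,a) \<in> Lof xs"
  by (induction xs) auto

lemma Lof_mem: "(a,b) \<in> Lof xs \<Longrightarrow> a \<in> set xs \<and> b \<in> set xs"
  using Lof_sub by blast

lemma Lof_trans: "distinct xs \<Longrightarrow> trans (Lof xs)"
proof (induction xs)
  case Nil then show ?case by (simp add: trans_def)
next
  case (Cons x xs)
  show ?case
  proof (rule transI)
    fix a b c assume ab: "(a,b) \<in> Lof (x#xs)" and bc: "(b,c) \<in> Lof (x#xs)"
    show "(a,c) \<in> Lof (x#xs)"
    proof (cases "a = x")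
      case True
      then show ?thesis using Lof_mem[OF bc] by auto
    next
      case False
      then have "(a,b) \<in> Lof xs" using ab by simp
      then have "b \<in> set xs" using Lof_mem[of a b xs] by simp
      then have "b \<noteq> x" using Cons.prems by auto
      then have "(b,c) \<in> Lof xs" using bc by simp
      then have "(a,c) \<in> Lof xs" using Cons.IH Cons.prems \<open>(a,b) \<in> Lof xs\<close>
        by (meson distinct.simps(2) transD)
      then show ?thesis by simp
    qed
  qed
qed

lemma Lof_antisym: "distinct xs \<Longrightarrow> antisym (Lof xs)"
proof (induction xs)
  case Nil then show ?case by (simp add: antisym_def)
next
  case (Cons x xs)
  show ?case
  proof (rule antisymI)
    fix a b assume ab: "(a,b) \<in> Lof (x#xs)" and ba: "(b,a) \<in> Lof (x#xs)"
    show "a = b"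
    proof (cases "a = x \<or> b = x")
      case True
      then show ?thesis
      proof
        assume ax: "a = x"
        show "a = b"
        proof (rule ccontr)
          assume "a \<noteq> b"
          then have "(b,x) \<in> Lof xs" using ba ax by simp
          then have "x \<in> set xs" using Lof_mem[of b x xs] by simp
          then show False using Cons.prems by simp
        qed
      next
        assume bx: "b = x"
        show "a = b"
        proof (rule ccontr)
          assume "a \<noteq> b"
          then have "(a,x) \<in> Lof xs" using ab bx by simp
          then have "x \<in> set xs" using Lof_mem[of a x xs] by simp
          then show False using Cons.prems by simp
        qed
      qed
    next
      case False
      then have "(a,b) \<in> Lof xs" "(b,a) \<in> Lof xs" using ab ba by auto
      then show ?thesis using Cons.IH Cons.prems by (meson antisymD distinct.simps(2))
    qed
  qed
qed

lemma Lof_total: "total_on (set xs) (Lof xs)"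
  by (induction xs) (auto simp: total_on_def)

lemma Lof_linear: "distinct xs \<Longrightarrow> linear_order_on (set xs) (Lof xs)"
  unfolding linear_order_on_def partial_order_on_def preorder_on_def refl_on_def
  using Lof_sub[of xs] Lof_refl[of _ xs] Lof_trans[of xs] Lof_antisym[of xs] Lof_total[of xs] by simp

lemma ok_imp_Lof: "distinct xs \<Longrightarrow> ok R xs \<Longrightarrow> (a,b) \<in> R \<Longrightarrow> a \<in> set xs \<Longrightarrow> b \<in> set xs \<Longrightarrow> (a,b) \<in> Lof xs"
proof (induction xs)
  case Nil then show ?case by simp
next
  case (Cons x xs)
  show ?case
  proof (cases "a = x")
    case True then show ?thesis using Cons.prems by auto
  next
    case False
    then have a: "a \<in> set xs" using Cons.prems by simp
    have "b \<noteq> x" using Cons.prems a by auto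
    then have "b \<in> set xs" using Cons.prems by simp
    then have "(a,b) \<in> Lof xs" using Cons.IH Cons.prems a by simp
    then show ?thesis by simp
  qed
qed

lemma Lof_imp_ok: "distinct xs \<Longrightarrow> (\<And>a b. (a,b) \<in> R \<Longrightarrow> a \<in> set xs \<Longrightarrow> b \<in> set xs \<Longrightarrow> (a,b) \<in> Lof xs) \<Longrightarrow> ok R xs"
proof (induction xs)
  case Nil then show ?case by simp
next
  case (Cons x xs)
  have "ok R xs"
  proof (rule Cons.IH)
    show "distinct xs" using Cons.prems(1) by simp
  next
    fix a b assume "(a,b) \<in> R" "a \<in> set xs" "b \<in> set xs"
    then have "(a,b) \<in> Lof (x#xs)" using Cons.prems(2)[of a b] by simp
    moreover have "a \<noteq> x" using \<open>a \<in> set xs\<close> Cons.prems(1) by auto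
    ultimately show "(a,b) \<in> Lof xs" by simp
  qed
  moreover have "\<forall>b\<in>set xs. (b,x) \<notin> R"
  proof
    fix b assume b: "b \<in> set xs"
    show "(b,x) \<notin> R"
    proof
      assume "(b,x) \<in> R"
      then have "(b,x) \<in> Lof (x#xs)" using Cons.prems b by auto
      then show False using b Cons.prems(1) Lof_sub[of xs] by auto
    qed
  qed
  ultimately show ?case by simp
qed

lemma Lof_diag: "(a,a) \<in> Lof xs \<longleftrightarrow> a \<in> set xs"
proof
  assume "(a,a) \<in> Lof xs" then show "a \<in> set xs" using Lof_mem[of a a xs] by simp
next
  assume "a \<in> set xs" then show "(a,a) \<in> Lof xs" by (rule Lof_refl)
qed

lemma Lof_set: "set xs = {a. (a,a) \<in> Lof xs}"
  by (simp add: Lof_diag)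

lemma Lof_inj: "distinct xs \<Longrightarrow> distinct ys \<Longrightarrow> Lof xs = Lof ys \<Longrightarrow> xs = ys"
proof (induction xs arbitrary: ys)
  case Nil
  then have "set ys = {}" using Lof_set[of ys] Lof_set[of "[]"] by simp
  then show ?case by simp
next
  case (Cons x xs)
  have sx: "set (x#xs) = set ys"
    using Cons.prems(3) Lof_set[of ys] Lof_set[of "x#xs"] by simp
  then obtain y ys' where ys: "ys = y # ys'" by (cases ys) auto
  have "x = y"
  proof (rule ccontr)
    assume ne: "x \<noteq> y"
    have "y \<in> set (x#xs)" using sx ys by simp
    then have "(x,y) \<in> Lof (x#xs)" by auto
    then have "(x,y) \<in> Lof ys" using Cons.prems(3) by (simp only:)
    then have "(x,y) \<in> Lof ys'" using ne ys by simp
    then have "y \<in> set ys'" using Lof_mem[of x y ys'] by simp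
    then show False using Cons.prems(2) ys by simp
  qed
  have "Lof xs = Lof ys'"
  proof -
    have "Lof xs = Lof (x#xs) - {x} \<times> UNIV" using Lof_sub[of xs] Cons.prems(1) by auto
    moreover have "Lof ys' = Lof ys - {y} \<times> UNIV" using Lof_sub[of ys'] Cons.prems(2) ys by auto
    ultimately show ?thesis using Cons.prems(3) \<open>x = y\<close> by (simp only:)
  qed
  then have "xs = ys'" using Cons.IH Cons.prems ys by simp
  then show ?case using ys \<open>x = y\<close> by simp
qed




lemma lin_min_aux:
  assumes lin: "linear_order_on A L"
  shows "finite B \<Longrightarrow> B \<noteq> {} \<Longrightarrow> B \<subseteq> A \<Longrightarrow> \<exists>m\<in>B. \<forall>a\<in>B. (m,a) \<in> L"
proof (induction B rule: finite_ne_induct)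
  case (singleton x)
  then show ?case using lin unfolding linear_order_on_def partial_order_on_def preorder_on_def refl_on_def
    by auto
next
  case (insert x F)
  then obtain m where m: "m \<in> F" "\<forall>a\<in>F. (m,a) \<in> L" by auto
  have tr: "trans L" and rf: "\<forall>a\<in>A. (a,a) \<in> L" and tot: "total_on A L"
    using lin unfolding linear_order_on_def partial_order_on_def preorder_on_def refl_on_def by auto
  have xA: "x \<in> A" "m \<in> A" using insert m by auto
  show ?case
  proof (cases "(x,m) \<in> L")
    case True
    have "\<forall>a\<in>insert x F. (x,a) \<in> L"
    proof
      fix a assume "a \<in> insert x F"
      then show "(x,a) \<in> L"
      proof
        assume "a = x" then show ?thesis using rf xA by simp
      next
        assume "a \<in> F" then have "(m,a) \<in> L" using m by simp
        then show ?thesis using True tr by (meson transD)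
      qed
    qed
    then show ?thesis by blast
  next
    case False
    then have "x \<noteq> m" using rf xA by auto
    then have "(m,x) \<in> L" using False tot xA unfolding total_on_def by blast
    then have "\<forall>a\<in>insert x F. (m,a) \<in> L" using m by simp
    then show ?thesis using m by blast
  qed
qed

lemma lin_min:
  "finite A \<Longrightarrow> A \<noteq> {} \<Longrightarrow> linear_order_on A L \<Longrightarrow> \<exists>m\<in>A. \<forall>a\<in>A. (m,a) \<in> L"
  using lin_min_aux[of A L A] by simp

lemma linear_restrict:
  assumes "linear_order_on A L" "A' \<subseteq> A"
  shows "linear_order_on A' (L \<inter> (A' \<times> A'))"
  using assms unfolding linear_order_on_def partial_order_on_def preorder_on_def refl_on_def
    total_on_def antisym_def trans_def
  by blast

lemma lin_list:
  "finite A \<Longrightarrow> linear_order_on A L \<Longrightarrow> \<exists>xs. distinct xs \<and> set xs = A \<and> Lof xs = L"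
proof (induction A arbitrary: L rule: finite_psubset_induct)
  case (psubset A)
  have sub: "L \<subseteq> A \<times> A" using psubset.prems
    unfolding linear_order_on_def partial_order_on_def preorder_on_def by simp
  show ?case
  proof (cases "A = {}")
    case True
    then have "L = {}" using sub by simp
    then show ?thesis using True by (intro exI[of _ "[]"]) simp
  next
    case False
    obtain m where m: "m \<in> A" "\<forall>a\<in>A. (m,a) \<in> L"
      using lin_min[OF psubset.hyps(1) False psubset.prems] by blast
    define A' where "A' = A - {m}"
    define L' where "L' = L \<inter> (A' \<times> A')"
    have "A' \<subset> A" using m A'_def by auto
    moreover have "linear_order_on A' L'"
      unfolding L'_def by (rule linear_restrict[OF psubset.prems]) (auto simp: A'_def)
    ultimately obtain ys where ys: "distinct ys" "set ys = A'" "Lof ys = L'"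
      using psubset.IH by blast
    have anti: "antisym L" using psubset.prems
      unfolding linear_order_on_def partial_order_on_def by simp
    have "Lof (m # ys) = L"
    proof
      show "Lof (m # ys) \<subseteq> L"
      proof
        fix p assume "p \<in> Lof (m # ys)"
        then have "p \<in> {m} \<times> set (m#ys) \<or> p \<in> Lof ys" by simp
        then show "p \<in> L"
        proof
          assume "p \<in> {m} \<times> set (m#ys)"
          then show ?thesis using m ys A'_def by auto
        next
          assume "p \<in> Lof ys" then show ?thesis using ys L'_def by simp
        qed
      qed
    next
      show "L \<subseteq> Lof (m # ys)"
      proof
        fix p assume pL: "p \<in> L"
        obtain a b where p: "p = (a,b)" by (cases p)
        have ab: "a \<in> A" "b \<in> A" using sub pL p by auto
        show "p \<in> Lof (m # ys)"
        proof (cases "a = m")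
          case True
          then show ?thesis using p ab ys A'_def by auto
        next
          case False
          have "b \<noteq> m"
          proof
            assume "b = m"
            then have "(m,a) \<in> L" "(a,m) \<in> L" using m ab pL p by auto
            then show False using anti False by (meson antisymD)
          qed
          then have "p \<in> L'" using False ab pL p A'_def L'_def by simp
          then show ?thesis using ys by simp
        qed
      qed
    qed
    moreover have "distinct (m # ys)" using ys A'_def by simp
    moreover have "set (m # ys) = A" using ys A'_def m by auto
    ultimately show ?thesis by blast
  qed
qed

lemma ext_cnt:
  assumes fin: "finite A" and RA: "R \<subseteq> A \<times> A"
  shows "ext A R = cnt R A"
proof -
  have "bij_betw Lof {xs \<in> permutations_of_set A. ok R xs} {L. linear_order_on A L \<and> L \<subseteq> A \<times> A \<and> R \<subseteq> L}"
    unfolding bij_betw_def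
  proof
    show "inj_on Lof {xs \<in> permutations_of_set A. ok R xs}"
      by (rule inj_onI) (auto simp: permutations_of_set_def intro: Lof_inj)
  next
    show "Lof ` {xs \<in> permutations_of_set A. ok R xs} = {L. linear_order_on A L \<and> L \<subseteq> A \<times> A \<and> R \<subseteq> L}"
    proof
      show "Lof ` {xs \<in> permutations_of_set A. ok R xs} \<subseteq> {L. linear_order_on A L \<and> L \<subseteq> A \<times> A \<and> R \<subseteq> L}"
      proof
        fix L assume "L \<in> Lof ` {xs \<in> permutations_of_set A. ok R xs}"
        then obtain xs where xs: "distinct xs" "set xs = A" "ok R xs" "L = Lof xs"
          by (auto simp: permutations_of_set_def)
        have "linear_order_on A L" using Lof_linear[OF xs(1)] xs by simp
        moreover have "L \<subseteq> A \<times> A" using Lof_sub[of xs] xs by simp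
        moreover have "R \<subseteq> L"
        proof
          fix p assume pR: "p \<in> R"
          obtain a b where p: "p = (a,b)" by (cases p)
          show "p \<in> L" using ok_imp_Lof[OF xs(1) xs(3), of a b] pR p RA xs by auto
        qed
        ultimately show "L \<in> {L. linear_order_on A L \<and> L \<subseteq> A \<times> A \<and> R \<subseteq> L}" by simp
      qed
    next
      show "{L. linear_order_on A L \<and> L \<subseteq> A \<times> A \<and> R \<subseteq> L} \<subseteq> Lof ` {xs \<in> permutations_of_set A. ok R xs}"
      proof
        fix L assume "L \<in> {L. linear_order_on A L \<and> L \<subseteq> A \<times> A \<and> R \<subseteq> L}"
        then have L: "linear_order_on A L" "R \<subseteq> L" by auto
        obtain xs where xs: "distinct xs" "set xs = A" "Lof xs = L" using lin_list[OF fin L(1)] by blast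
        have "ok R xs"
          by (rule Lof_imp_ok[OF xs(1)]) (use L(2) xs(3) in blast)
        then show "L \<in> Lof ` {xs \<in> permutations_of_set A. ok R xs}"
          using xs by (auto simp: permutations_of_set_def)
      qed
    qed
  qed
  then show ?thesis unfolding ext_def cnt_def by (simp add: bij_betw_same_card)
qed




definition W :: "'a rel \<Rightarrow> 'a list \<times> 'a list \<Rightarrow> 'a list set" where
  "W R p = shuffles (fst p) (snd p) \<inter> {xs. ok R xs}"

lemma ok_filter: "ok R xs \<Longrightarrow> ok R (filter P xs)"
  unfolding ok_def by (rule sorted_wrt_filter)

lemma count_decomp:
  fixes A :: "'a set" and P :: "'a \<Rightarrow> bool" and R :: "'a rel"
  assumes fin: "finite A"
  defines "U \<equiv> {u \<in> permutations_of_set {a\<in>A. P a}. ok R u}"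
      and "V \<equiv> {v \<in> permutations_of_set {a\<in>A. \<not> P a}. ok R v}"
  shows "cnt R A = (\<Sum>p\<in>U \<times> V. card (W R p))"
proof -
  have eq: "{xs \<in> permutations_of_set A. ok R xs} = (\<Union>p\<in>U \<times> V. W R p)"
  proof
    show "{xs \<in> permutations_of_set A. ok R xs} \<subseteq> (\<Union>p\<in>U \<times> V. W R p)"
    proof
      fix xs assume xs: "xs \<in> {xs \<in> permutations_of_set A. ok R xs}"
      then have d: "distinct xs" "set xs = A" "ok R xs" by (auto simp: permutations_of_set_def)
      have u: "filter P xs \<in> U" unfolding U_def using d
        by (auto simp: permutations_of_set_def ok_filter)
      have v: "filter (\<lambda>a. \<not> P a) xs \<in> V" unfolding V_def using d
        by (auto simp: permutations_of_set_def ok_filter)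
      have "xs \<in> W R (filter P xs, filter (\<lambda>a. \<not> P a) xs)"
        unfolding W_def using partition_in_shuffles[of xs P] d by simp
      then show "xs \<in> (\<Union>p\<in>U \<times> V. W R p)" using u v by blast
    qed
  next
    show "(\<Union>p\<in>U \<times> V. W R p) \<subseteq> {xs \<in> permutations_of_set A. ok R xs}"
    proof
      fix zs assume "zs \<in> (\<Union>p\<in>U \<times> V. W R p)"
      then obtain u v where uv: "u \<in> U" "v \<in> V" "zs \<in> shuffles u v" "ok R zs"
        unfolding W_def by auto
      have du: "distinct u" "set u = {a\<in>A. P a}" using uv(1) unfolding U_def
        by (auto simp: permutations_of_set_def)
      have dv: "distinct v" "set v = {a\<in>A. \<not> P a}" using uv(2) unfolding V_def
        by (auto simp: permutations_of_set_def)
      have "distinct zs" using distinct_disjoint_shuffles[OF du(1) dv(1) _ uv(3)] du dv by auto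
      moreover have "set zs = A" using set_shuffles[OF uv(3)] du dv by auto
      ultimately show "zs \<in> {xs \<in> permutations_of_set A. ok R xs}" using uv(4)
        by (simp add: permutations_of_set_def)
    qed
  qed
  have finU: "finite U" unfolding U_def by simp
  have finV: "finite V" unfolding V_def by simp
  have disj: "\<forall>p\<in>U \<times> V. \<forall>q\<in>U \<times> V. p \<noteq> q \<longrightarrow> W R p \<inter> W R q = {}"
  proof (intro ballI impI)
    fix p q assume p: "p \<in> U \<times> V" and q: "q \<in> U \<times> V" and ne: "p \<noteq> q"
    have "\<And>r. r \<in> U \<times> V \<Longrightarrow> shuffles (fst r) (snd r) = partition P -` {r}"
    proof -
      fix r assume r: "r \<in> U \<times> V"
      have "fst r \<in> U" "snd r \<in> V" using r by (simp_all add: mem_Times_iff)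
      then have "set (fst r) = {a\<in>A. P a}" "set (snd r) = {a\<in>A. \<not> P a}"
        unfolding U_def V_def by (simp_all add: permutations_of_set_def)
      then have "\<And>x. x \<in> set (fst r) \<Longrightarrow> P x" "\<And>x. x \<in> set (snd r) \<Longrightarrow> \<not> P x"
        by simp_all
      then have "partition P -` {(fst r, snd r)} = shuffles (fst r) (snd r)"
        by (rule inv_image_partition)
      then show "shuffles (fst r) (snd r) = partition P -` {r}" by simp
    qed
    then have "W R p \<subseteq> partition P -` {p}" "W R q \<subseteq> partition P -` {q}"
      using p q unfolding W_def by auto
    then show "W R p \<inter> W R q = {}" using ne by auto
  qed
  have "cnt R A = card (\<Union>p\<in>U \<times> V. W R p)" unfolding cnt_def eq ..
  also have "\<dots> = (\<Sum>p\<in>U \<times> V. card (W R p))"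
    by (rule card_UN_disjoint) (use finU finV disj in \<open>auto simp: W_def\<close>)
  finally show ?thesis .
qed

lemma ok_shuffle:
  "zs \<in> shuffles u v \<Longrightarrow> ok R u \<Longrightarrow> ok R v \<Longrightarrow>
   (\<forall>a\<in>set u. \<forall>b\<in>set v. (a,b) \<notin> R \<and> (b,a) \<notin> R) \<Longrightarrow> ok R zs"
proof (induction u v arbitrary: zs rule: shuffles.induct)
  case (1 ys)
  then show ?case by simp
next
  case (2 xs)
  then show ?case by simp
next
  case (3 x xs y ys)
  from "3.prems"(1) have "zs \<in> (#) x ` shuffles xs (y # ys) \<or> zs \<in> (#) y ` shuffles (x # xs) ys" by simp
  then show ?case
  proof
    assume "zs \<in> (#) x ` shuffles xs (y # ys)"
    then obtain zs' where zs': "zs = x # zs'" "zs' \<in> shuffles xs (y # ys)" by auto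
    have "ok R zs'" using "3.IH"(1)[OF zs'(2)] "3.prems" by simp
    moreover have "\<forall>b\<in>set zs'. (b,x) \<notin> R"
      using set_shuffles[OF zs'(2)] "3.prems" by auto
    ultimately show ?case using zs' by simp
  next
    assume "zs \<in> (#) y ` shuffles (x # xs) ys"
    then obtain zs' where zs': "zs = y # zs'" "zs' \<in> shuffles (x # xs) ys" by auto
    have "ok R zs'" using "3.IH"(2)[OF zs'(2)] "3.prems" by simp
    moreover have "\<forall>b\<in>set zs'. (b,y) \<notin> R"
      using set_shuffles[OF zs'(2)] "3.prems" by auto
    ultimately show ?case using zs' by simp
  qed
qed

lemma card_pset: "u \<in> permutations_of_set S \<Longrightarrow> length u = card S"
  by (rule length_finite_permutations_of_set)

lemma count_indep:
  assumes fin: "finite A"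
      and nocross: "\<And>a b. (a,b) \<in> R \<Longrightarrow> a \<in> A \<Longrightarrow> b \<in> A \<Longrightarrow> (P a \<longleftrightarrow> P b)"
  shows "cnt R A = (card A choose card {a\<in>A. P a}) * cnt R {a\<in>A. P a} * cnt R {a\<in>A. \<not> P a}"
proof -
  define U where "U = {u \<in> permutations_of_set {a\<in>A. P a}. ok R u}"
  define V where "V = {v \<in> permutations_of_set {a\<in>A. \<not> P a}. ok R v}"
  have cA: "card A = card {a\<in>A. P a} + card {a\<in>A. \<not> P a}"
    using fin by (subst card_Un_disjoint[symmetric]) (auto intro: arg_cong[where f=card])
  have "\<forall>p\<in>U \<times> V. card (W R p) = card A choose card {a\<in>A. P a}"
  proof
    fix p assume p: "p \<in> U \<times> V"
    then obtain u v where uv: "p = (u,v)" "u \<in> U" "v \<in> V" by auto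
    have u1: "u \<in> permutations_of_set {a\<in>A. P a}" "ok R u" using uv(2) unfolding U_def by simp_all
    have v1: "v \<in> permutations_of_set {a\<in>A. \<not> P a}" "ok R v" using uv(3) unfolding V_def by simp_all
    have du: "distinct u" "set u = {a\<in>A. P a}" "ok R u" "length u = card {a\<in>A. P a}"
      using u1 permutations_of_setD[OF u1(1)] card_pset[OF u1(1)] by simp_all
    have dv: "distinct v" "set v = {a\<in>A. \<not> P a}" "ok R v" "length v = card {a\<in>A. \<not> P a}"
      using v1 permutations_of_setD[OF v1(1)] card_pset[OF v1(1)] by simp_all
    have cross: "\<forall>a\<in>set u. \<forall>b\<in>set v. (a,b) \<notin> R \<and> (b,a) \<notin> R"
    proof (intro ballI)
      fix a b assume a: "a \<in> set u" and b: "b \<in> set v"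
      have a': "a \<in> A" "P a" using a du(2) by simp_all
      have b': "b \<in> A" "\<not> P b" using b dv(2) by simp_all
      show "(a,b) \<notin> R \<and> (b,a) \<notin> R"
      proof (intro conjI notI)
        assume "(a,b) \<in> R" then show False using nocross[of a b] a' b' by simp
      next
        assume "(b,a) \<in> R" then show False using nocross[of b a] a' b' by simp
      qed
    qed
    have "W R p = shuffles u v"
      unfolding W_def uv(1) using ok_shuffle[OF _ du(3) dv(3) cross] by auto
    also have "card \<dots> = card A choose card {a\<in>A. P a}"
      using card_disjoint_shuffles[of u v] du dv cA by auto
    finally show "card (W R p) = card A choose card {a\<in>A. P a}" .
  qed
  then have all: "\<And>p. p \<in> U \<times> V \<Longrightarrow> card (W R p) = card A choose card {a\<in>A. P a}" by blast
  have "cnt R A = (\<Sum>p\<in>U \<times> V. card (W R p))"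
    using count_decomp[where P=P and R=R, OF fin] unfolding U_def V_def by simp
  also have "\<dots> = (\<Sum>p\<in>U \<times> V. card A choose card {a\<in>A. P a})"
    by (rule sum.cong[OF refl all])
  also have "\<dots> = card U * card V * (card A choose card {a\<in>A. P a})"
    by (simp add: card_cartesian_product)
  finally show ?thesis unfolding U_def V_def cnt_def by (simp add: mult.commute mult.left_commute)
qed

lemma app_in_shuffles: "u @ [x] \<in> shuffles u [x]"
proof (induction u)
  case Nil then show ?case by simp
next
  case (Cons a u)
  then show ?case using Cons_in_shuffles_leftI by fastforce
qed

lemma count_remove:
  assumes fin: "finite A" and x: "x \<in> A" and y: "y \<in> A" "y \<noteq> x"
      and rel: "(x,y) \<in> R \<or> (y,x) \<in> R"
  shows "cnt R A \<le> (card A - 1) * cnt R (A - {x})"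
proof -
  let ?P = "\<lambda>a. a \<noteq> x"
  define U where "U = {u \<in> permutations_of_set {a\<in>A. ?P a}. ok R u}"
  define V where "V = {v \<in> permutations_of_set {a\<in>A. \<not> ?P a}. ok R v}"
  have SA: "{a\<in>A. ?P a} = A - {x}" by auto
  have TA: "{a\<in>A. \<not> ?P a} = {x}" using x by auto
  have cV: "card V \<le> 1"
  proof -
    have "V \<subseteq> {[x]}" unfolding V_def TA by auto
    then have "card V \<le> card {[x]}" by (intro card_mono) simp_all
    then show ?thesis by simp
  qed
  have bound: "\<forall>p\<in>U \<times> V. card (W R p) \<le> card A - 1"
  proof
    fix p assume p: "p \<in> U \<times> V"
    then obtain u where uv: "p = (u,[x])" "u \<in> U" unfolding V_def TA by auto
    have u1: "u \<in> permutations_of_set (A - {x})" using uv(2) unfolding U_def SA by simp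
    have du: "distinct u" "set u = A - {x}" "length u = card (A - {x})"
      using permutations_of_setD[OF u1] card_pset[OF u1] by simp_all
    have cA: "card A = Suc (card (A - {x}))" using card_Suc_Diff1[OF fin x] by simp
    have "card (shuffles u [x]) = Suc (length u)"
      using card_disjoint_shuffles[of u "[x]"] du(2) by simp
    then have cs: "card (shuffles u [x]) = card A" using du(3) cA by simp
    have du3: "length u = card A - 1" using du(3) cA by simp
    have yu: "y \<in> set u" using du y by simp
    obtain bad where bad: "bad \<in> shuffles u [x]" "\<not> ok R bad"
    proof (cases "(y,x) \<in> R")
      case True
      have "x # u \<in> shuffles u [x]" using Cons_in_shuffles_rightI[of u u "[]" x] by simp
      moreover have "\<not> ok R (x # u)" using True yu by auto
      ultimately show ?thesis using that by blast
    next
      case False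
      then have xy: "(x,y) \<in> R" using rel by simp
      have "u @ [x] \<in> shuffles u [x]" by (rule app_in_shuffles)
      moreover have "\<not> ok R (u @ [x])" using xy yu by (auto simp: ok_def sorted_wrt_append)
      ultimately show ?thesis using that by blast
    qed
    have "W R p \<subseteq> shuffles u [x] - {bad}" unfolding W_def uv(1) using bad by auto
    then have "card (W R p) \<le> card (shuffles u [x] - {bad})" by (intro card_mono) auto
    also have "\<dots> = card A - 1" using bad cs by simp
    finally show "card (W R p) \<le> card A - 1" .
  qed
  have "cnt R A = (\<Sum>p\<in>U \<times> V. card (W R p))"
    using count_decomp[where P="?P" and R=R, OF fin] unfolding U_def V_def by simp
  also have "\<dots> \<le> card (U \<times> V) * (card A - 1)"
  proof -
    have "\<And>p. p \<in> U \<times> V \<Longrightarrow> card (W R p) \<le> card A - 1" using bound by blast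
    then have "(\<Sum>p\<in>U \<times> V. card (W R p)) \<le> of_nat (card (U \<times> V)) * (card A - 1)"
      by (rule sum_bounded_above)
    then show ?thesis by simp
  qed
  also have "\<dots> = card U * card V * (card A - 1)" by (simp add: card_cartesian_product)
  also have "\<dots> \<le> card U * (card A - 1)" using cV
    by (metis mult.right_neutral mult_le_mono1 mult_le_mono2)
  also have "card U = cnt R (A - {x})" unfolding U_def SA cnt_def ..
  finally show ?thesis by (simp add: mult.commute)
qed




definition noniso :: "'a rel \<Rightarrow> 'a set \<Rightarrow> 'a \<Rightarrow> bool" where
  "noniso R A z \<longleftrightarrow> (\<exists>w\<in>A. w \<noteq> z \<and> ((z,w) \<in> R \<or> (w,z) \<in> R))"

lemma cnt_le_fact: "finite A \<Longrightarrow> cnt R A \<le> fact (card A)"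
  unfolding cnt_def
  by (metis (no_types, lifting) card_mono card_permutations_of_set finite_permutations_of_set mem_Collect_eq subsetI)

lemma cnt_empty: "cnt R {} = 1"
proof -
  have "{xs \<in> permutations_of_set {}. ok R xs} = {[]}" by auto
  then show ?thesis unfolding cnt_def by simp
qed

lemma cnt_pair_le:
  assumes "x \<noteq> y" "(x,y) \<in> R \<or> (y,x) \<in> R"
  shows "cnt R {x,y} \<le> 1"
proof -
  have "{xs \<in> permutations_of_set {x,y}. ok R xs} \<subseteq> {[x,y],[y,x]}"
    using permutations_of_set_doubleton[OF assms(1)] by auto
  moreover have "\<not> (ok R [x,y] \<and> ok R [y,x])" using assms(2) by auto
  ultimately obtain q where "{xs \<in> permutations_of_set {x,y}. ok R xs} \<subseteq> {q}" by blast
  then have "card {xs \<in> permutations_of_set {x,y}. ok R xs} \<le> card {q}"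
    by (intro card_mono) simp_all
  then show ?thesis unfolding cnt_def by simp
qed

lemma key:
  "finite A \<Longrightarrow> (\<forall>z\<in>A. noniso R A z) \<Longrightarrow> card A * cnt R A \<le> fact (card A)"
proof (induction "card A" arbitrary: A rule: less_induct)
  case less
  note fin = less.prems(1) and all = less.prems(2)
  show ?case
  proof (cases "A = {}")
    case True then show ?thesis by simp
  next
    case ne: False
    show ?thesis
    proof (cases "\<exists>x\<in>A. \<forall>z\<in>A - {x}. noniso R (A - {x}) z")
      case True
      then obtain x where x: "x \<in> A" "\<forall>z\<in>A - {x}. noniso R (A - {x}) z" by blast
      obtain y where y: "y \<in> A" "y \<noteq> x" "(x,y) \<in> R \<or> (y,x) \<in> R"
        using all x(1) unfolding noniso_def by blast
      define m where "m = card A"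
      have cA: "m = Suc (card (A - {x}))" using card_Suc_Diff1[OF fin x(1)] m_def by simp
      have IH: "card (A - {x}) * cnt R (A - {x}) \<le> fact (card (A - {x}))"
        using less.hyps[of "A - {x}"] cA m_def fin x by simp
      have rem: "cnt R A \<le> (m - 1) * cnt R (A - {x})"
        using count_remove[OF fin x(1) y] m_def by simp
      have "m * cnt R A \<le> m * ((m - 1) * cnt R (A - {x}))" using rem by simp
      also have "\<dots> \<le> m * fact (m - 1)" using IH cA by (intro mult_le_mono2) simp
      also have "\<dots> = fact m" using cA by simp
      finally show ?thesis using m_def by simp
    next
      case False
      obtain x where x: "x \<in> A" using ne by blast
      obtain y where y: "y \<in> A - {x}" "\<not> noniso R (A - {x}) y" using False x by blast
      have ynb: "\<And>w. w \<in> A \<Longrightarrow> w \<noteq> y \<Longrightarrow> (y,w) \<in> R \<or> (w,y) \<in> R \<Longrightarrow> w = x"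
        using y(2) unfolding noniso_def by blast
      have xy: "(x,y) \<in> R \<or> (y,x) \<in> R"
      proof -
        obtain w where "w \<in> A" "w \<noteq> y" "(y,w) \<in> R \<or> (w,y) \<in> R"
          using all y(1) unfolding noniso_def by blast
        then show ?thesis using ynb by blast
      qed
      obtain z where z: "z \<in> A - {y}" "\<not> noniso R (A - {y}) z" using False y(1) by blast
      have znb: "\<And>w. w \<in> A \<Longrightarrow> w \<noteq> z \<Longrightarrow> (z,w) \<in> R \<or> (w,z) \<in> R \<Longrightarrow> w = y"
        using z(2) unfolding noniso_def by blast
      have "z = x"
      proof -
        obtain w where "w \<in> A" "w \<noteq> z" "(z,w) \<in> R \<or> (w,z) \<in> R"
          using all z(1) unfolding noniso_def by blast
        then have "w = y" using znb by blast
        then have "(y,z) \<in> R \<or> (z,y) \<in> R" using \<open>(z,w) \<in> R \<or> (w,z) \<in> R\<close> by blast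
        then show ?thesis using ynb[of z] z(1) by blast
      qed
      then have xnb: "\<And>w. w \<in> A \<Longrightarrow> w \<noteq> x \<Longrightarrow> (x,w) \<in> R \<or> (w,x) \<in> R \<Longrightarrow> w = y"
        using znb by blast
      have xney: "x \<noteq> y" using y(1) by auto
      define P where "P = (\<lambda>a. a = x \<or> a = y)"
      define B where "B = A - {x, y}"
      have SA: "{a\<in>A. P a} = {x,y}" using x y(1) unfolding P_def by auto
      have TA: "{a\<in>A. \<not> P a} = B" unfolding P_def B_def by auto
      have nocross: "\<And>a b. (a,b) \<in> R \<Longrightarrow> a \<in> A \<Longrightarrow> b \<in> A \<Longrightarrow> (P a \<longleftrightarrow> P b)"
      proof -
        fix a b assume ab: "(a,b) \<in> R" "a \<in> A" "b \<in> A"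
        show "P a \<longleftrightarrow> P b"
        proof (cases "a = b")
          case True then show ?thesis by simp
        next
          case False
          have 1: "a = x \<Longrightarrow> b = y" using xnb[of b] ab False by blast
          have 2: "a = y \<Longrightarrow> b = x" using ynb[of b] ab False by blast
          have 3: "b = x \<Longrightarrow> a = y" using xnb[of a] ab False by blast
          have 4: "b = y \<Longrightarrow> a = x" using ynb[of a] ab False by blast
          show ?thesis unfolding P_def using 1 2 3 4 by blast
        qed
      qed
      define m where "m = card A"
      have cardS: "card {x,y} = 2" using xney by simp
      have cB: "card B = m - 2" unfolding B_def m_def using x y(1) fin cardS
        by (simp add: card_Diff_subset)
      have "card {x,y} \<le> card A" using x y(1) fin by (intro card_mono) auto
      then have m2: "m \<ge> 2" using cardS unfolding m_def by simp
      have dec: "cnt R A = (m choose 2) * cnt R {x,y} * cnt R B"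
        using count_indep[of A R P, OF fin nocross] SA TA cardS m_def by simp
      have pair: "cnt R {x,y} \<le> 1" by (rule cnt_pair_le[OF xney xy])
      have cA: "cnt R A \<le> (m choose 2) * cnt R B"
        using dec pair by (metis mult.right_neutral mult_le_mono1 mult_le_mono2)
      have fm: "fact m = 2 * fact (m - 2) * (m choose 2)"
        using binomial_fact_lemma[of 2 m] m2 by simp
      show ?thesis
      proof (cases "B = {}")
        case True
        then have "cnt R B = 1" by (simp add: cnt_empty)
        then have "cnt R A \<le> m choose 2" using cA by simp
        moreover have "m = 2" using cB True m2 by simp
        ultimately show ?thesis using m_def by simp
      next
        case Bne: False
        have finB: "finite B" using fin B_def by simp
        have allB: "\<forall>z\<in>B. noniso R B z"
        proof
          fix z assume zB: "z \<in> B"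
          obtain w where w: "w \<in> A" "w \<noteq> z" "(z,w) \<in> R \<or> (w,z) \<in> R"
            using all zB unfolding B_def noniso_def by blast
          have "w \<noteq> x" using xnb[of z] zB w unfolding B_def by blast
          moreover have "w \<noteq> y" using ynb[of z] zB w unfolding B_def by blast
          ultimately show "noniso R B z" unfolding noniso_def B_def using w by blast
        qed
        obtain z where zB: "z \<in> B" using Bne by blast
        obtain w where w: "w \<in> B" "w \<noteq> z" using allB zB unfolding noniso_def by blast
        have "card {z,w} \<le> card B" using finB zB w by (intro card_mono) auto
        then have "card B \<ge> 2" using w(2) by simp
        then have m4: "m \<ge> 4" using cB by simp
        have "card B < card A" using fin x unfolding B_def by (intro psubset_card_mono) auto
        then have IH: "card B * cnt R B \<le> fact (card B)"
          using less.hyps[of B] finB allB by simp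
        have "m * cnt R B \<le> 2 * (m - 2) * cnt R B" using m4 by (intro mult_le_mono1) simp
        also have "\<dots> = 2 * (card B * cnt R B)" using cB by simp
        also have "\<dots> \<le> 2 * fact (m - 2)" using IH cB by simp
        finally have h: "m * cnt R B \<le> 2 * fact (m - 2)" .
        have "m * cnt R A \<le> m * ((m choose 2) * cnt R B)" using cA by simp
        also have "\<dots> = (m choose 2) * (m * cnt R B)" by simp
        also have "\<dots> \<le> (m choose 2) * (2 * fact (m - 2))" using h by simp
        also have "\<dots> = fact m" using fm by simp
        finally show ?thesis using m_def by simp
      qed
    qed
  qed
qed




lemma ok_map:
  "(\<And>a b. a \<in> set xs \<Longrightarrow> b \<in> set xs \<Longrightarrow> ((g a, g b) \<in> R \<longleftrightarrow> (a,b) \<in> Q)) \<Longrightarrow>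
   ok R (map g xs) = ok Q xs"
proof (induction xs)
  case Nil then show ?case by simp
next
  case (Cons x xs)
  have "ok R (map g xs) = ok Q xs" using Cons by simp
  moreover have "(\<forall>b\<in>set (map g xs). (b, g x) \<notin> R) = (\<forall>b\<in>set xs. (b, x) \<notin> Q)"
    using Cons.prems by auto
  ultimately show ?case by simp
qed

lemma cnt_transport:
  assumes bij: "bij_betw g X Y"
      and rel: "\<And>a b. a \<in> X \<Longrightarrow> b \<in> X \<Longrightarrow> ((g a, g b) \<in> R \<longleftrightarrow> (a,b) \<in> Q)"
  shows "cnt R Y = cnt Q X"
proof -
  have inj: "inj_on g X" and Y: "g ` X = Y" using bij by (auto simp: bij_betw_def)
  have pY: "permutations_of_set Y = map g ` permutations_of_set X"
    using permutations_of_set_image_inj[OF inj] Y by simp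
  have "{ys \<in> permutations_of_set Y. ok R ys} = map g ` {xs \<in> permutations_of_set X. ok Q xs}"
  proof -
    have "\<And>xs. xs \<in> permutations_of_set X \<Longrightarrow> ok R (map g xs) = ok Q xs"
    proof -
      fix xs assume "xs \<in> permutations_of_set X"
      then have "set xs = X" by (simp add: permutations_of_set_def)
      then show "ok R (map g xs) = ok Q xs" using rel by (intro ok_map) auto
    qed
    then show ?thesis unfolding pY by auto
  qed
  moreover have "inj_on (map g) {xs \<in> permutations_of_set X. ok Q xs}"
  proof (rule inj_onI)
    fix xs ys assume "xs \<in> {xs \<in> permutations_of_set X. ok Q xs}" "ys \<in> {xs \<in> permutations_of_set X. ok Q xs}"
      "map g xs = map g ys"
    then show "xs = ys" using inj inj_on_map_eq_map[of g xs ys]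
      by (simp add: permutations_of_set_def)
  qed
  ultimately show ?thesis unfolding cnt_def by (simp add: card_image)
qed

lemma cnt_antichain:
  assumes "finite T" "\<And>a b. a \<in> T \<Longrightarrow> b \<in> T \<Longrightarrow> (a,b) \<in> R \<Longrightarrow> a = b"
  shows "cnt R T = fact (card T)"
proof -
  have "\<And>xs. xs \<in> permutations_of_set T \<Longrightarrow> ok R xs"
  proof -
    fix xs assume xs: "xs \<in> permutations_of_set T"
    then have d: "distinct xs" "set xs = T" by (simp_all add: permutations_of_set_def)
    show "ok R xs" unfolding ok_def sorted_wrt_iff_nth_less
    proof (intro allI impI notI)
      fix i j assume ij: "i < j" "j < length xs" and r: "(xs ! j, xs ! i) \<in> R"
      have "xs ! j \<in> T" "xs ! i \<in> T" using ij d by auto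
      then have "xs ! j = xs ! i" using assms(2) r by blast
      then show False using d(1) ij nth_eq_iff_index_eq by fastforce
    qed
  qed
  then have "{xs \<in> permutations_of_set T. ok R xs} = permutations_of_set T" by auto
  then show ?thesis unfolding cnt_def using assms(1) by simp
qed

lemma ok_cong:
  "(\<And>a b. a \<in> set xs \<Longrightarrow> b \<in> set xs \<Longrightarrow> ((a,b) \<in> R \<longleftrightarrow> (a,b) \<in> Q)) \<Longrightarrow> ok R xs = ok Q xs"
  using ok_map[of xs id R Q] by simp

lemma cnt_cong:
  assumes "\<And>a b. a \<in> S \<Longrightarrow> b \<in> S \<Longrightarrow> ((a,b) \<in> R \<longleftrightarrow> (a,b) \<in> Q)"
  shows "cnt R S = cnt Q S"
proof -
  have "{xs \<in> permutations_of_set S. ok R xs} = {xs \<in> permutations_of_set S. ok Q xs}"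
  proof -
    have "\<And>xs. xs \<in> permutations_of_set S \<Longrightarrow> ok R xs = ok Q xs"
    proof -
      fix xs assume "xs \<in> permutations_of_set S"
      then have "set xs = S" by (simp add: permutations_of_set_def)
      then show "ok R xs = ok Q xs" using assms by (intro ok_cong) auto
    qed
    then show ?thesis by auto
  qed
  then show ?thesis unfolding cnt_def by simp
qed




lemma decomp_iso:
  assumes fin: "finite A" and SA: "S \<subseteq> A"
      and iso: "\<And>a b. (a,b) \<in> R \<Longrightarrow> a \<in> A \<Longrightarrow> b \<in> A \<Longrightarrow> a \<noteq> b \<Longrightarrow> a \<in> S \<and> b \<in> S"
  shows "cnt R A = (card A choose card S) * cnt R S * fact (card A - card S)"
proof -
  have nocross: "\<And>a b. (a,b) \<in> R \<Longrightarrow> a \<in> A \<Longrightarrow> b \<in> A \<Longrightarrow> (a \<in> S \<longleftrightarrow> b \<in> S)"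
    using iso by blast
  have e1: "{a\<in>A. a \<in> S} = S" using SA by auto
  have e2: "{a\<in>A. a \<notin> S} = A - S" by auto
  have "cnt R (A - S) = fact (card (A - S))"
    by (rule cnt_antichain) (use fin iso in auto)
  moreover have "card (A - S) = card A - card S" using fin SA by (simp add: card_Diff_subset finite_subset)
  ultimately show ?thesis using count_indep[of A R "\<lambda>a. a \<in> S", OF fin nocross] e1 e2 by simp
qed

lemma fact_split: "r \<le> n \<Longrightarrow> fact n = fact r * ((n choose r) * fact (n - r))"
  using binomial_fact_lemma[of r n] by (simp add: mult.commute mult.left_commute)

lemma fact_div: "r \<le> n \<Longrightarrow> (fact n :: nat) div fact r = (n choose r) * fact (n - r)"
  using fact_split[of r n] by simp

theorem theorem6p3:
  fixes r n :: nat
  assumes "1 \<le> r" and "r < n"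
  shows "{x \<in> LE n. real (fact n) / real (r + 1) < real x \<and> x \<le> fact n}
       = {(fact n div fact r) * l | l. l \<in> LE r \<and>
            real (fact r) / real (r + 1) < real l \<and> l \<le> fact r}"
proof -
  define K :: nat where "K = (n choose r) * fact (n - r)"
  have Kdiv: "fact n div fact r = K" unfolding K_def using fact_div[of r n] assms by simp
  have Kn: "fact n = fact r * K" unfolding K_def using fact_split[of r n] assms by simp
  have Kpos: "K > 0" using Kn by (metis fact_nonzero mult_is_0 neq0_conv)
  have range_iff: "\<And>l. real (fact n) / real (r + 1) < real (K * l) \<longleftrightarrow> real (fact r) / real (r + 1) < real l"
  proof -
    fix l
    have eq: "real (fact n) / real (r + 1) = real K * (real (fact r) / real (r + 1))"
      using Kn by (simp add: of_nat_mult)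
    have kp: "real K > 0" using Kpos by simp
    show "real (fact n) / real (r + 1) < real (K * l) \<longleftrightarrow> real (fact r) / real (r + 1) < real l"
      unfolding eq of_nat_mult by (rule mult_less_cancel_left_pos[OF kp])
  qed
  have le_iff: "\<And>l. K * l \<le> fact n \<longleftrightarrow> l \<le> fact r"
    using Kn Kpos by (simp add: mult.commute)
  show ?thesis
  proof
    show "{x \<in> LE n. real (fact n) / real (r + 1) < real x \<and> x \<le> fact n}
       \<subseteq> {(fact n div fact r) * l | l. l \<in> LE r \<and> real (fact r) / real (r + 1) < real l \<and> l \<le> fact r}"
    proof
      fix x assume "x \<in> {x \<in> LE n. real (fact n) / real (r + 1) < real x \<and> x \<le> fact n}"
      then have xLE: "x \<in> LE n" and xr: "real (fact n) / real (r + 1) < real x" "x \<le> fact n" by auto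
      obtain P where P: "is_poset {0..<n} P" "x = ext {0..<n} P" using xLE unfolding LE_def by auto
      define A where "A = {0..<n::nat}"
      have finA: "finite A" and cardA: "card A = n" unfolding A_def by simp_all
      have Ps: "P \<subseteq> A \<times> A" "refl_on A P" "trans P" "antisym P"
        using P(1) unfolding is_poset_def partial_order_on_def preorder_on_def A_def by auto
      define M where "M = {a\<in>A. noniso P A a}"
      define m where "m = card M"
      have MA: "M \<subseteq> A" unfolding M_def by auto
      have finM: "finite M" using finA MA finite_subset by blast
      have isoM: "\<And>a b. (a,b) \<in> P \<Longrightarrow> a \<in> A \<Longrightarrow> b \<in> A \<Longrightarrow> a \<noteq> b \<Longrightarrow> a \<in> M \<and> b \<in> M"
      proof -
        fix a b assume h: "(a,b) \<in> P" "a \<in> A" "b \<in> A" "a \<noteq> b"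
        have "noniso P A a" unfolding noniso_def using h by (intro bexI[of _ b]) auto
        moreover have "noniso P A b" unfolding noniso_def using h by (intro bexI[of _ a]) auto
        ultimately show "a \<in> M \<and> b \<in> M" unfolding M_def using h by simp
      qed
      have allM: "\<forall>z\<in>M. noniso P M z"
      proof
        fix z assume zM: "z \<in> M"
        then obtain w where w: "w \<in> A" "w \<noteq> z" "(z,w) \<in> P \<or> (w,z) \<in> P"
          unfolding M_def noniso_def by blast
        have "z \<in> A" using zM MA by blast
        then have "w \<in> M" using w(3) isoM[of z w] isoM[of w z] w(1,2) by auto
        then show "noniso P M z" unfolding noniso_def using w by blast
      qed
      have keyM: "m * cnt P M \<le> fact m" using key[OF finM allM] m_def by simp
      have xc: "x = cnt P A" using P(2) ext_cnt[OF finA Ps(1)] A_def by simp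
      have mn: "m \<le> n" using card_mono[OF finA MA] cardA m_def by simp
      have decM: "cnt P A = (n choose m) * cnt P M * fact (n - m)"
        using decomp_iso[OF finA MA isoM] cardA m_def by simp
      have mr: "m \<le> r"
      proof (rule ccontr)
        assume "\<not> m \<le> r"
        then have rm: "r + 1 \<le> m" by simp
        have "(r + 1) * x \<le> m * x" using rm by (rule mult_le_mono1)
        also have "\<dots> = (n choose m) * fact (n - m) * (m * cnt P M)" using xc decM by simp
        also have "\<dots> \<le> (n choose m) * fact (n - m) * fact m" using keyM by (intro mult_le_mono2)
        also have "\<dots> = fact n" using fact_split[OF mn] by simp
        finally have "(r + 1) * x \<le> fact n" .
        then have "real (r + 1) * real x \<le> real (fact n)"
          by (metis of_nat_le_iff of_nat_mult)
        then have "real x \<le> real (fact n) / real (r + 1)"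
          by (simp add: pos_le_divide_eq mult.commute)
        then show False using xr(1) by simp
      qed
      have "r - m \<le> card (A - M)" using card_Diff_subset[OF finM MA] cardA m_def assms mr by simp
      then obtain T where T: "T \<subseteq> A - M" "card T = r - m" "finite T"
        by (rule obtain_subset_with_card_n)
      define M' where "M' = M \<union> T"
      have M'A: "M' \<subseteq> A" using T MA unfolding M'_def by auto
      have cM': "card M' = r" unfolding M'_def using card_Un_disjoint[OF finM T(3)] T mr m_def by auto
      have isoM': "\<And>a b. (a,b) \<in> P \<Longrightarrow> a \<in> A \<Longrightarrow> b \<in> A \<Longrightarrow> a \<noteq> b \<Longrightarrow> a \<in> M' \<and> b \<in> M'"
        using isoM unfolding M'_def by blast
      have decM': "cnt P A = (n choose r) * cnt P M' * fact (n - r)"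
        using decomp_iso[OF finA M'A isoM'] cardA cM' by simp
      have finM': "finite M'" using finA M'A finite_subset by blast
      obtain g where g: "bij_betw g {0..<r} M'"
        using bij_betw_iff_card[of "{0..<r}" M'] finM' cM' by auto
      have gM: "\<And>i. i < r \<Longrightarrow> g i \<in> M'" using g by (auto simp: bij_betw_def)
      have ginj: "inj_on g {0..<r}" using g by (simp add: bij_betw_def)
      define Q where "Q = {(i,j). i < r \<and> j < r \<and> (g i, g j) \<in> P}"
      have Qs: "Q \<subseteq> {0..<r} \<times> {0..<r}" unfolding Q_def by auto
      have "refl_on {0..<r} Q"
      proof (unfold refl_on_def, intro ballI)
        fix i assume i: "i \<in> {0..<r}"
        then have "g i \<in> A" using gM M'A by auto
        then have "(g i, g i) \<in> P" using Ps(2) by (simp add: refl_on_def)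
        then show "(i,i) \<in> Q" using i unfolding Q_def by simp
      qed
      moreover have "trans Q"
      proof (rule transI)
        fix a b c assume "(a,b) \<in> Q" "(b,c) \<in> Q"
        then show "(a,c) \<in> Q" using Ps(3) unfolding Q_def by (auto dest: transD)
      qed
      moreover have "antisym Q"
      proof (rule antisymI)
        fix a b assume "(a,b) \<in> Q" "(b,a) \<in> Q"
        then have "g a = g b" "a < r" "b < r" using Ps(4) unfolding Q_def by (auto dest: antisymD)
        then show "a = b" using ginj by (auto dest: inj_onD)
      qed
      ultimately have posQ: "is_poset {0..<r} Q"
        unfolding is_poset_def partial_order_on_def preorder_on_def using Qs by simp
      have cQ: "cnt P M' = cnt Q {0..<r}"
        by (rule cnt_transport[OF g]) (auto simp: Q_def)
      define l where "l = ext {0..<r} Q"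
      have lc: "l = cnt Q {0..<r}" unfolding l_def using ext_cnt[OF _ Qs] by simp
      have lLE: "l \<in> LE r" unfolding LE_def l_def using posQ by blast
      have xK: "x = K * l" using xc decM' cQ lc unfolding K_def by simp
      have "real (fact r) / real (r + 1) < real l" using range_iff[of l] xr(1) xK by simp
      moreover have "l \<le> fact r" using le_iff[of l] xr(2) xK by simp
      ultimately show "x \<in> {(fact n div fact r) * l | l. l \<in> LE r \<and> real (fact r) / real (r + 1) < real l \<and> l \<le> fact r}"
        using lLE xK Kdiv by blast
    qed
  next
    show "{(fact n div fact r) * l | l. l \<in> LE r \<and> real (fact r) / real (r + 1) < real l \<and> l \<le> fact r}
       \<subseteq> {x \<in> LE n. real (fact n) / real (r + 1) < real x \<and> x \<le> fact n}"
    proof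
      fix x assume "x \<in> {(fact n div fact r) * l | l. l \<in> LE r \<and> real (fact r) / real (r + 1) < real l \<and> l \<le> fact r}"
      then obtain l where x: "x = K * l" and l: "l \<in> LE r" "real (fact r) / real (r + 1) < real l" "l \<le> fact r"
        using Kdiv by auto
      obtain Q where Q: "is_poset {0..<r} Q" "l = ext {0..<r} Q" using l(1) unfolding LE_def by auto
      have Qs: "Q \<subseteq> {0..<r} \<times> {0..<r}" "refl_on {0..<r} Q" "trans Q" "antisym Q"
        using Q(1) unfolding is_poset_def partial_order_on_def preorder_on_def by auto
      define P where "P = Q \<union> {(i,i) | i. r \<le> i \<and> i < n}"
      have Ps: "P \<subseteq> {0..<n} \<times> {0..<n}" using Qs(1) assms unfolding P_def by auto
      have "refl_on {0..<n} P"
        unfolding refl_on_def P_def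
      proof
        fix i assume "i \<in> {0..<n}"
        then show "(i,i) \<in> Q \<union> {(i,i) | i. r \<le> i \<and> i < n}"
          using Qs(2) unfolding refl_on_def by (cases "i < r") auto
      qed
      moreover have "trans P"
      proof (rule transI)
        fix a b c assume ab: "(a,b) \<in> P" and bc: "(b,c) \<in> P"
        show "(a,c) \<in> P"
        proof (cases "(a,b) \<in> Q")
          case True
          show ?thesis
          proof (cases "(b,c) \<in> Q")
            case True
            then show ?thesis using \<open>(a,b) \<in> Q\<close> Qs(3) unfolding P_def by (meson UnI1 transD)
          next
            case False
            then have "b = c" using bc unfolding P_def by auto
            then show ?thesis using ab by simp
          qed
        next
          case False
          then have "a = b" using ab unfolding P_def by auto
          then show ?thesis using bc by simp
        qed
      qed
      moreover have "antisym P"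
      proof (rule antisymI)
        fix a b assume ab: "(a,b) \<in> P" and ba: "(b,a) \<in> P"
        show "a = b"
        proof (cases "(a,b) \<in> Q \<and> (b,a) \<in> Q")
          case True then show ?thesis using Qs(4) by (meson antisymD)
        next
          case False then show ?thesis using ab ba unfolding P_def by auto
        qed
      qed
      ultimately have posP: "is_poset {0..<n} P"
        unfolding is_poset_def partial_order_on_def preorder_on_def using Ps by simp
      have iso: "\<And>a b. (a,b) \<in> P \<Longrightarrow> a \<in> {0..<n} \<Longrightarrow> b \<in> {0..<n} \<Longrightarrow> a \<noteq> b \<Longrightarrow> a \<in> {0..<r} \<and> b \<in> {0..<r}"
        using Qs(1) unfolding P_def by auto
      have "cnt P {0..<n} = (n choose r) * cnt P {0..<r} * fact (n - r)"
        using decomp_iso[of "{0..<n}" "{0..<r}" P, OF _ _ iso] assms by simp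
      moreover have "cnt P {0..<r} = cnt Q {0..<r}"
        by (rule cnt_cong) (auto simp: P_def)
      moreover have "ext {0..<n} P = cnt P {0..<n}" using ext_cnt[OF _ Ps] by simp
      moreover have "ext {0..<r} Q = cnt Q {0..<r}" using ext_cnt[OF _ Qs(1)] by simp
      ultimately have "ext {0..<n} P = K * l" using Q(2) unfolding K_def by simp
      then have "x \<in> LE n" using posP x unfolding LE_def by (metis (mono_tags, lifting) mem_Collect_eq)
      then show "x \<in> {x \<in> LE n. real (fact n) / real (r + 1) < real x \<and> x \<le> fact n}"
        using range_iff[of l] le_iff[of l] l x by simp
    qed
  qed
qed


end
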